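(* Let $X$ be an integral regular projective curve of genus $g$ over $\mathbb{F}_q$ and $\mathbf{n}_m=(n_0,\dots,n_m)$ ($m\ge0$) a tuple of positive integers. Then $$\operatorname{Res}_{T_{\mathbf{n}_m}=1}\widehat Z^{(\mathbf{n}_m)}_X(T_{\mathbf{n}_m})=q_{\mathbf{n}_{m-1}}^{\binom{n_m}{2}(g-1)}\sum_{\substack{d_1,\dots,d_k>0\\d_1+\cdots+d_k=n_m}}\frac{\widehat v_{d_1}\cdots\widehat v_{d_k}}{\prod_{j=1}^{k-1}(1-q_{\mathbf{n}_{m-1}}^{d_j+d_{j+1}})}.$$
   Context: Let $\zeta_X(s)=\sum_{D\ge 0}N(D)^{-s}$ be the Artin zeta function of $X$ ($D$ running over effective divisors) and $\widehat\zeta_X(s)=q^{s(g-1)}\zeta_X(s)$ the complete Artin zeta function, a rational function of $q^{-s}$. Derived zeta functions are defined recursively. For the empty tuple $\mathbf{n}_{-1}=()$ put $q_{\mathbf{n}_{-1}}=q$, $T_{\mathbf{n}_{-1}}=q^{-s}$, $\widehat\zeta^{(\mathbf{n}_{-1})}_X=\widehat\zeta_X$. For a tuple $\mathbf{n}_m=(n_0,\dots,n_m)$ of positive integers ($m\ge 0$) put $\mathbf{n}_{m-1}=(n_0,\dots,n_{m-1})$, $q_{\mathbf{n}_m}=q^{n_0n_1\cdots n_m}$, $T_{\mathbf{n}_m}=q^{-n_0n_1\cdots n_m s}$. Writing $\widehat Z^{(\mathbf{n}_{m-1})}_X(T_{\mathbf{n}_{m-1}}):=\widehat\zeta^{(\mathbf{n}_{m-1})}_X(s)$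 (a rational function of $T_{\mathbf{n}_{m-1}}$), set $\widehat\zeta^{(\mathbf{n}_{m-1})}_X(1):=\operatorname{Res}_{T_{\mathbf{n}_{m-1}}=1}\widehat Z^{(\mathbf{n}_{m-1})}_X(T_{\mathbf{n}_{m-1}})$ and for integers $N\ge 1$, $\widehat v_N:=\prod_{k=1}^{N}\widehat\zeta^{(\mathbf{n}_{m-1})}_X(k)$. Then $$\widehat\zeta^{(\mathbf{n}_m)}_X(s)=q_{\mathbf{n}_{m-1}}^{\binom{n_m}{2}(g-1)}\sum_{a=1}^{n_m}\Biggl(\sum_{\substack{k_1,\dots,k_p>0\\k_1+\cdots+k_p=n_m-a}}\frac{\widehat v_{k_1}\cdots\widehat v_{k_p}}{\prod_{j=1}^{p-1}(1-q_{\mathbf{n}_{m-1}}^{k_j+k_{j+1}})}\cdot\frac{1}{1-q_{\mathbf{n}_{m-1}}^{n_ms-n_m+a+k_p}}\Biggr)\widehat\zeta^{(\mathbf{n}_{m-1})}_X(n_ms-n_m+a)\Biggl(\sum_{\substack{l_1,\dots,l_r>0\\l_1+\cdots+l_r=a-1}}\frac{1}{1-q_{\mathbf{n}_{m-1}}^{-n_ms+n_m-a+1+l_1}}\cdot\frac{\widehat v_{l_1}\cdots\widehat v_{l_r}}{\prod_{j=1}^{r-1}(1-q_{\mathbf{n}_{m-1}}^{l_j+l_{j+1}})}\Biggr),$$ where the inner sums run over ordered tuples of positive integers (of any length) with the indicated sum, and an inner sum over tuples summing to $0$ is defined to be $1$. One writes $\widehat Z^{(\mathbf{n}_m)}_X(T_{\mathbf{n}_m}):=\widehat\zeta^{(\mathbf{n}_m)}_X(s)$,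 a rational function of $T_{\mathbf{n}_m}$. (For $m=0$ this is the $\mathrm{SL}_{n_0}$-zeta function of $X$, which coincides with the rank $n_0$ non-abelian zeta function of $X$.) *)

theory Defs
  imports "HOL-Complex_Analysis.Complex_Analysis" "HOL-Computational_Algebra.Polynomial"
begin

text \<open>For an integral regular projective curve X of genus g over F_q (with F_q its full
  constant field), the Artin zeta function in the variable T = q^(-s) is
  Z_X(T) = P_X(T) / ((1 - T)(1 - q T)) where P_X is an integer polynomial of degree 2g with
  P_X(0) = 1, the functional equation P_X(T) = q^g T^(2g) P_X(1/(qT)), and all of whose roots
  have absolute value q^(-1/2) (Riemann hypothesis).\<close>

definition prime_power :: "nat \<Rightarrow> bool" where
  "prime_power q \<longleftrightarrow> (\<exists>p e. prime p \<and> e \<ge> 1 \<and> q = p ^ e)"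

definition curve_L_poly :: "nat \<Rightarrow> nat \<Rightarrow> int poly \<Rightarrow> bool" where
  "curve_L_poly q g P \<longleftrightarrow>
     prime_power q \<and> degree P = 2 * g \<and> coeff P 0 = 1 \<and>
     (\<forall>T::complex. T \<noteq> 0 \<longrightarrow>
        poly (map_poly of_int P) T
          = of_nat q ^ g * T ^ (2 * g) * poly (map_poly of_int P) (1 / (of_nat q * T))) \<and>
     (\<forall>z::complex. poly (map_poly of_int P) z = 0 \<longrightarrow> norm z = 1 / sqrt (real q))"

text \<open>Complete Artin zeta function as a function of T = q^(-s):
  q^(s(g-1)) Z_X(q^(-s)) = T^(1-g) Z_X(T).\<close>

definition Zhat0 :: "nat \<Rightarrow> nat \<Rightarrow> int poly \<Rightarrow> complex \<Rightarrow> complex" where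
  "Zhat0 q g P T = T powi (1 - int g) * poly (map_poly of_int P) T / ((1 - T) * (1 - of_nat q * T))"

definition compositions :: "nat \<Rightarrow> nat list set" where
  "compositions N = {ks. sum_list ks = N \<and> 0 \<notin> set ks}"

definition adj_prod :: "complex \<Rightarrow> nat list \<Rightarrow> complex" where
  "adj_prod Q ks = (\<Prod>j<length ks - 1. (1 - Q ^ (ks ! j + ks ! (j + 1))))"

text \<open>The value zeta-hat(k) of a derived zeta function Z (as function of its own variable
  T, with q_(previous) = Q): the residue at T = 1 for k = 1, and for k >= 2 the value of the
  rational function at T = Q^(-k) (taken as a limit, so that removable singularities of
  the pointwise formula do not matter).\<close>
definition zhat_at :: "(complex \<Rightarrow> complex) \<Rightarrow> complex \<Rightarrow> nat \<Rightarrow> complex" where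
  "zhat_at Z Q k = (if k = 1 then residue Z 1 else Lim (at (Q powi (- int k))) Z)"

definition vhat :: "(complex \<Rightarrow> complex) \<Rightarrow> complex \<Rightarrow> nat \<Rightarrow> complex" where
  "vhat Z Q N = (\<Prod>k=1..N. zhat_at Z Q k)"

text \<open>Z is the previous derived zeta function as a function of
  T_prev, Q = q_prev, n = n_m, and the result is a function of T = T_(n_m).  With
  s the complex variable, T_prev evaluated at n s - n + a equals Q^(n-a) T,
  Q^(n s - n + a + k_p) = Q^(a + k_p - n) / T and Q^(-n s + n - a + 1 + l_1) = T Q^(n - a + 1 + l_1).\<close>
definition left_sum :: "(complex \<Rightarrow> complex) \<Rightarrow> complex \<Rightarrow> nat \<Rightarrow> nat \<Rightarrow> complex \<Rightarrow> complex" where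
  "left_sum Z Q n a T =
     (if n - a = 0 then 1 else
      (\<Sum>ks\<in>compositions (n - a).
         (\<Prod>k\<leftarrow>ks. vhat Z Q k) / adj_prod Q ks
         * (1 / (1 - Q powi (int a + int (last ks) - int n) / T))))"

definition right_sum :: "(complex \<Rightarrow> complex) \<Rightarrow> complex \<Rightarrow> nat \<Rightarrow> nat \<Rightarrow> complex \<Rightarrow> complex" where
  "right_sum Z Q n a T =
     (if a - 1 = 0 then 1 else
      (\<Sum>ls\<in>compositions (a - 1).
         (1 / (1 - T * Q ^ (n - a + 1 + hd ls)))
         * ((\<Prod>l\<leftarrow>ls. vhat Z Q l) / adj_prod Q ls)))"

definition derive_step :: "nat \<Rightarrow> (complex \<Rightarrow> complex) \<Rightarrow> complex \<Rightarrow> nat \<Rightarrow> complex \<Rightarrow> complex" where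
  "derive_step g Z Q n T =
     Q powi (int (n choose 2) * (int g - 1)) *
     (\<Sum>a=1..n. left_sum Z Q n a T * Z (Q ^ (n - a) * T) * right_sum Z Q n a T)"

fun dzeta_rev :: "nat \<Rightarrow> nat \<Rightarrow> int poly \<Rightarrow> nat list \<Rightarrow> complex \<Rightarrow> complex" where
  "dzeta_rev q g P [] = Zhat0 q g P"
| "dzeta_rev q g P (n # rs) = derive_step g (dzeta_rev q g P rs) (of_nat q ^ prod_list rs) n"

definition dzeta :: "nat \<Rightarrow> nat \<Rightarrow> int poly \<Rightarrow> nat list \<Rightarrow> complex \<Rightarrow> complex" where
  "dzeta q g P ns = dzeta_rev q g P (rev ns)"

definition qn :: "nat \<Rightarrow> nat list \<Rightarrow> complex" where
  "qn q ns = of_nat q ^ prod_list ns"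

end

theory Submission
  imports Defs
begin


lemma comps_0: "compositions 0 = {[]}"
proof -
  have "ks = []" if "sum_list ks = 0" "0 \<notin> set ks" for ks :: "nat list"
    using that by (cases ks) auto
  then show ?thesis by (auto simp: compositions_def)
qed

lemma length_le_sum: "0 \<notin> set ks \<Longrightarrow> length ks \<le> sum_list (ks::nat list)"
  by (induction ks) auto

lemma comps_finite: "finite (compositions N)"
proof -
  have "compositions N \<subseteq> {xs. set xs \<subseteq> {0..N} \<and> length xs \<le> N}"
  proof
    fix xs assume "xs \<in> compositions N"
    then have "sum_list xs = N" "0 \<notin> set xs" by (auto simp: compositions_def)
    then show "xs \<in> {xs. set xs \<subseteq> {0..N} \<and> length xs \<le> N}"
      using length_le_sum[of xs] member_le_sum_list[of _ xs] by auto
  qed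
  moreover have "finite {xs. set xs \<subseteq> {0..N} \<and> length xs \<le> N}"
    by (rule finite_lists_length_le) simp
  ultimately show ?thesis by (rule finite_subset)
qed

lemma comps_decomp:
  assumes "n > 0"
  shows "compositions n = (\<lambda>(d,ls). d # ls) ` (SIGMA d:{1..n}. compositions (n - d))"
proof
  show "compositions n \<subseteq> (\<lambda>(d,ls). d # ls) ` (SIGMA d:{1..n}. compositions (n - d))"
  proof
    fix ks assume ks: "ks \<in> compositions n"
    then obtain d ls where e: "ks = d # ls" using assms by (cases ks) (auto simp: compositions_def)
    with ks have "d \<in> {1..n}" "ls \<in> compositions (n - d)" by (auto simp: compositions_def)
    then show "ks \<in> (\<lambda>(d,ls). d # ls) ` (SIGMA d:{1..n}. compositions (n - d))"
      using e by (auto intro!: image_eqI[where x="(d,ls)"])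
  qed
  show "(\<lambda>(d,ls). d # ls) ` (SIGMA d:{1..n}. compositions (n - d)) \<subseteq> compositions n"
    by (auto simp: compositions_def)
qed

lemma comps_last:
  assumes "ks \<in> compositions N" "N > 0"
  shows "ks \<noteq> []" "last ks \<le> N" "last ks = N \<Longrightarrow> ks = [N]"
proof -
  show ne: "ks \<noteq> []" using assms by (auto simp: compositions_def)
  have e: "ks = butlast ks @ [last ks]" using ne by simp
  have s0: "sum_list ks = N" using assms(1) by (simp add: compositions_def)
  have s: "sum_list (butlast ks) + last ks = N" using s0 e
    by (metis sum_list_append sum_list.Cons sum_list.Nil add_0_right)
  then show "last ks \<le> N" by simp
  assume "last ks = N"
  with s have "sum_list (butlast ks) = 0" by simp
  moreover have "0 \<notin> set (butlast ks)" using assms(1) in_set_butlastD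
    by (fastforce simp: compositions_def)
  ultimately have "butlast ks = []" by (cases "butlast ks") auto
  with e \<open>last ks = N\<close> show "ks = [N]" by simp
qed

lemma comps_rev: "bij_betw rev (compositions N) (compositions N)"
  by (rule bij_betw_byWitness[where f'=rev]) (auto simp: compositions_def)

lemma adj_prod_rev: "adj_prod Q (rev ks) = adj_prod Q ks"
proof -
  let ?M = "length ks - 1"
  let ?g = "\<lambda>j. 1 - Q ^ (ks ! j + ks ! (j + 1))"
  have "adj_prod Q ks = (\<Prod>i<?M. ?g (?M - Suc i))"
    unfolding adj_prod_def by (rule prod.nat_diff_reindex[symmetric])
  also have "\<dots> = adj_prod Q (rev ks)"
    unfolding adj_prod_def length_rev
  proof (rule prod.cong[OF refl])
    fix i assume "i \<in> {..<?M}"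
    then have i: "i + 1 < length ks" by auto
    have e1: "?M - Suc i + 1 = length ks - Suc i" using i by arith
    have 1: "rev ks ! i = ks ! (?M - Suc i + 1)" unfolding e1 using i by (simp add: rev_nth)
    have e2: "length ks - Suc (i + 1) = ?M - Suc i" by arith
    have "rev ks ! (i + 1) = ks ! (length ks - Suc (i + 1))" using i by (simp add: rev_nth)
    then have 2: "rev ks ! (i + 1) = ks ! (?M - Suc i)" unfolding e2 .
    show "?g (?M - Suc i) = 1 - Q ^ (rev ks ! i + rev ks ! (i + 1))"
      using 1 2 by (simp add: add.commute)
  qed
  finally show ?thesis by simp
qed

lemma adj_prod_single: "adj_prod Q [d] = 1"
  by (simp add: adj_prod_def)

lemma adj_prod_Cons:
  assumes "ls \<noteq> []"
  shows "adj_prod Q (d # ls) = (1 - Q ^ (d + hd ls)) * adj_prod Q ls"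
proof -
  obtain M where M: "length ls = Suc M" using assms by (cases ls) auto
  have "adj_prod Q (d # ls) = (\<Prod>j<Suc M. 1 - Q ^ ((d#ls) ! j + (d#ls) ! (j + 1)))"
    by (simp add: adj_prod_def M)
  also have "\<dots> = (1 - Q ^ (d + hd ls)) * (\<Prod>j<M. 1 - Q ^ (ls ! j + ls ! (j + 1)))"
    by (subst prod.lessThan_Suc_shift) (simp add: hd_conv_nth assms)
  also have "\<dots> = (1 - Q ^ (d + hd ls)) * adj_prod Q ls"
    by (simp add: adj_prod_def M)
  finally show ?thesis .
qed
lemma powi_1_minus: "(x::complex) \<noteq> 0 \<Longrightarrow> x powi (1 - int g) = x / x ^ g"
proof -
  assume x: "x \<noteq> 0"
  have "x powi (int 1 - int g) = x powi int 1 / x powi int g"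
    by (rule power_int_diff) (use x in simp)
  then show ?thesis by simp
qed

lemma Zhat0_alg:
  fixes Q T X Y pT :: complex
  assumes "Q \<noteq> 0" "T \<noteq> 0" "X \<noteq> 0" "Y \<noteq> 0" "T \<noteq> 1" "Q * T \<noteq> 1"
  shows "(1 / (Q * T)) / (1 / (Y * X)) * (pT / (Y * (X * X)))
      / ((1 - 1 / (Q * T)) * (1 - Q * (1 / (Q * T)))) = T / X * pT / ((1 - T) * (1 - Q * T))"
proof -
  have "T - 1 \<noteq> 0" "Q * T - 1 \<noteq> 0" using assms by auto
  then show ?thesis using assms by (simp add: field_simps)
qed

lemma Zhat0_FE:
  assumes q: "q \<noteq> 0" and T: "T \<noteq> 0"
    and hP: "\<forall>T::complex. T \<noteq> 0 \<longrightarrow>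
        poly (map_poly of_int P) T
          = of_nat q ^ g * T ^ (2 * g) * poly (map_poly of_int P) (1 / (of_nat q * T))"
  shows "Zhat0 q g P (1 / (of_nat q * T)) = Zhat0 q g P T"
proof -
  define p where "p = poly (map_poly (of_int :: int \<Rightarrow> complex) P)"
  define Q :: complex where "Q = of_nat q"
  have Q0: "Q \<noteq> 0" using q by (simp add: Q_def)
  have e: "p T = (Q ^ g * (T ^ g * T ^ g)) * p (1 / (Q * T))"
    using hP T unfolding p_def Q_def by (simp add: mult_2 power_add)
  have nz: "Q ^ g * (T ^ g * T ^ g) \<noteq> 0" using Q0 T by simp
  have hp: "p (1 / (Q * T)) = p T / (Q ^ g * (T ^ g * T ^ g))"
    using nz by (simp add: e)
  have QT: "1 / (Q * T) \<noteq> 0" using Q0 T by simp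
  have pw: "(1 / (Q * T)) ^ g = 1 / (Q ^ g * T ^ g)"
    by (simp add: power_divide power_mult_distrib)
  have "Zhat0 q g P (1 / (Q * T)) = (1 / (Q * T)) / (1 / (Q ^ g * T ^ g)) * (p T / (Q ^ g * (T ^ g * T ^ g)))
      / ((1 - 1 / (Q * T)) * (1 - Q * (1 / (Q * T))))"
    unfolding Zhat0_def powi_1_minus[OF QT] pw[symmetric] hp[symmetric]
    unfolding p_def Q_def by simp
  also have "\<dots> = T / T ^ g * p T / ((1 - T) * (1 - Q * T))"
  proof (cases "T = 1 \<or> Q * T = 1")
    case True
    then show ?thesis using Q0 by auto
  next
    case False
    then show ?thesis using Zhat0_alg[OF Q0 T _ _, of "T ^ g" "Q ^ g" "p T"] Q0 T by simp
  qed
  also have "\<dots> = Zhat0 q g P T"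
    unfolding Zhat0_def powi_1_minus[OF T] p_def Q_def by simp
  finally show ?thesis by (simp add: Q_def)
qed
lemma prodv_rev: "(\<Prod>k\<leftarrow>rev ks. f k) = (\<Prod>k\<leftarrow>ks. (f k :: complex))"
  by (simp flip: rev_map)

lemma left_right_FE:
  assumes Q: "Q \<noteq> 0" and T: "T \<noteq> 0" and a: "1 \<le> a" "a \<le> n"
  shows "left_sum Z Q n (n + 1 - a) (1 / (Q ^ n * T)) = right_sum Z Q n a T"
proof (cases "a - 1 = 0")
  case True
  then show ?thesis using a by (simp add: left_sum_def right_sum_def)
next
  case False
  have na: "n - (n + 1 - a) = a - 1" using a by simp
  have key: "Q powi (int (n + 1 - a) + int (last ks) - int n) / (1 / (Q ^ n * T))
      = T * Q ^ (n - a + 1 + last ks)" for ks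
  proof -
    have "int (n + 1 - a) + int (last ks) - int n = int (n - a + 1 + last ks) - int n"
      using a by simp
    then have "Q powi (int (n + 1 - a) + int (last ks) - int n) = Q powi (int (n - a + 1 + last ks) - int n)"
      by (simp only:)
    also have "\<dots> = Q powi int (n - a + 1 + last ks) / Q powi int n"
      by (rule power_int_diff) (use Q in simp)
    also have "\<dots> = Q ^ (n - a + 1 + last ks) / Q ^ n"
      by (simp only: power_int_of_nat)
    finally show ?thesis using Q T by (simp add: field_simps)
  qed
  have "right_sum Z Q n a T = (\<Sum>ls\<in>compositions (a - 1).
         (1 / (1 - T * Q ^ (n - a + 1 + hd ls))) * ((\<Prod>l\<leftarrow>ls. vhat Z Q l) / adj_prod Q ls))"
    using False by (simp add: right_sum_def)
  also have "\<dots> = (\<Sum>ks\<in>compositions (a - 1).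
         (1 / (1 - T * Q ^ (n - a + 1 + hd (rev ks)))) * ((\<Prod>l\<leftarrow>rev ks. vhat Z Q l) / adj_prod Q (rev ks)))"
    by (rule sum.reindex_bij_betw[OF comps_rev, symmetric])
  also have "\<dots> = (\<Sum>ks\<in>compositions (a - 1).
         (\<Prod>k\<leftarrow>ks. vhat Z Q k) / adj_prod Q ks
         * (1 / (1 - Q powi (int (n + 1 - a) + int (last ks) - int n) / (1 / (Q ^ n * T)))))"
  proof (rule sum.cong[OF refl])
    fix ks assume ks: "ks \<in> compositions (a - 1)"
    then have "ks \<noteq> []" using False by (auto simp: compositions_def)
    then show "(1 / (1 - T * Q ^ (n - a + 1 + hd (rev ks)))) * ((\<Prod>l\<leftarrow>rev ks. vhat Z Q l) / adj_prod Q (rev ks))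
      = (\<Prod>k\<leftarrow>ks. vhat Z Q k) / adj_prod Q ks
         * (1 / (1 - Q powi (int (n + 1 - a) + int (last ks) - int n) / (1 / (Q ^ n * T))))"
      unfolding key prodv_rev adj_prod_rev hd_rev by (simp only: mult.commute)
  qed
  also have "\<dots> = left_sum Z Q n (n + 1 - a) (1 / (Q ^ n * T))"
    using False na by (simp add: left_sum_def)
  finally show ?thesis by simp
qed

lemma derive_step_FE:
  assumes Q: "Q \<noteq> 0" and T: "T \<noteq> 0"
    and FE: "\<And>T. T \<noteq> 0 \<Longrightarrow> Z (1 / (Q * T)) = Z T"
  shows "derive_step g Z Q n (1 / (Q ^ n * T)) = derive_step g Z Q n T"
proof -
  let ?T' = "1 / (Q ^ n * T)"
  let ?f = "\<lambda>a. left_sum Z Q n a ?T' * Z (Q ^ (n - a) * ?T') * right_sum Z Q n a ?T'"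
  have "(\<Sum>a=1..n. ?f a) = (\<Sum>a=1..n. ?f (n + 1 - a))"
    by (subst sum.atLeastAtMost_rev) simp
  also have "\<dots> = (\<Sum>a=1..n. left_sum Z Q n a T * Z (Q ^ (n - a) * T) * right_sum Z Q n a T)"
  proof (rule sum.cong[OF refl])
    fix a assume "a \<in> {1..n}"
    then have a: "1 \<le> a" "a \<le> n" by auto
    have l: "left_sum Z Q n (n + 1 - a) ?T' = right_sum Z Q n a T"
      by (rule left_right_FE[OF Q T a])
    have T2: "1 / (Q ^ n * T) \<noteq> 0" using Q T by simp
    have "left_sum Z Q n (n + 1 - (n + 1 - a)) (1 / (Q ^ n * ?T')) = right_sum Z Q n (n + 1 - a) ?T'"
      by (rule left_right_FE[OF Q T2]) (use a in auto)
    moreover have "1 / (Q ^ n * ?T') = T" using Q T by simp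
    moreover have "n + 1 - (n + 1 - a) = a" using a by simp
    ultimately have r: "right_sum Z Q n (n + 1 - a) ?T' = left_sum Z Q n a T" by simp
    have "Q ^ n = Q ^ (a - 1) * (Q * Q ^ (n - a))"
      using a by (simp flip: power_add power_Suc)
    then have "Q ^ (n - (n + 1 - a)) * ?T' = 1 / (Q * (Q ^ (n - a) * T))"
      using a Q T by (simp add: field_simps)
    then have z: "Z (Q ^ (n - (n + 1 - a)) * ?T') = Z (Q ^ (n - a) * T)"
      using FE[of "Q ^ (n - a) * T"] Q T by simp
    show "?f (n + 1 - a) = left_sum Z Q n a T * Z (Q ^ (n - a) * T) * right_sum Z Q n a T"
    proof -
      have "?f (n + 1 - a) = right_sum Z Q n a T * Z (Q ^ (n - a) * T) * left_sum Z Q n a T"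
        by (simp only: l r z)
      then show ?thesis by (simp only: mult.commute mult.left_commute mult.assoc)
    qed
  qed
  finally show ?thesis by (simp add: derive_step_def)
qed

lemma dzeta_rev_FE:
  assumes q: "q \<noteq> 0" and T: "T \<noteq> 0"
    and hP: "\<forall>T::complex. T \<noteq> 0 \<longrightarrow>
        poly (map_poly of_int P) T
          = of_nat q ^ g * T ^ (2 * g) * poly (map_poly of_int P) (1 / (of_nat q * T))"
  shows "dzeta_rev q g P rs (1 / (of_nat q ^ prod_list rs * T)) = dzeta_rev q g P rs T"
  using T
proof (induction rs arbitrary: T)
  case Nil
  then show ?case using Zhat0_FE[OF q Nil hP] by simp
next
  case (Cons n rs)
  have Q: "(of_nat q ^ prod_list rs :: complex) \<noteq> 0" using q by simp
  have "(of_nat q ^ prod_list (n # rs) :: complex) = (of_nat q ^ prod_list rs) ^ n"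
    by (simp only: prod_list.Cons power_mult[symmetric] mult.commute)
  then show ?case
    using derive_step_FE[OF Q Cons.prems, of "dzeta_rev q g P rs" g n] Cons.IH by simp
qed

definition Sh :: "complex set" where "Sh = {T. norm T > 1/2}"

lemma open_Sh: "open Sh"
  unfolding Sh_def by (rule open_Collect_less) (auto intro: continuous_intros)

lemma one_in_Sh: "1 \<in> Sh" by (simp add: Sh_def)

lemma open_Sh1: "open (Sh - {1})"
  using open_Sh by auto

lemma pow_ge2: "2 \<le> N \<Longrightarrow> 1 \<le> j \<Longrightarrow> (2::real) \<le> real N ^ j"
proof -
  assume a: "2 \<le> N" "1 \<le> j"
  have "(2::real) ^ j \<le> real N ^ j" by (rule power_mono) (use a in auto)
  moreover have "(2::real) \<le> 2 ^ j" using a(2) by (cases j) auto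
  ultimately show ?thesis by linarith
qed

lemma norm_TQ:
  assumes N: "2 \<le> N" and j: "1 \<le> j" and T: "T \<in> Sh"
  shows "norm (T * of_nat N ^ j) > 1"
proof -
  have "norm (T * of_nat N ^ j) = norm T * real N ^ j" by (simp add: norm_mult norm_power)
  moreover have "norm T > 1/2" using T by (simp add: Sh_def)
  moreover have "real N ^ j \<ge> 2" using pow_ge2[OF N j] .
  ultimately have "1/2 * 2 < norm T * real N ^ j"
    by (intro mult_less_le_imp_less) auto
  then show ?thesis using \<open>norm (T * of_nat N ^ j) = norm T * real N ^ j\<close> by simp
qed

lemma norm_Qneg:
  assumes N: "2 \<le> N" and e: "e < 0"
  shows "norm ((of_nat N :: complex) powi e) \<le> 1/2"
proof -
  define m where "m = nat (- e)"
  have m: "e = - int m" "m \<ge> 1" using e by (auto simp: m_def)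
  have "norm ((of_nat N :: complex) powi e) = 1 / real N ^ m"
    using m by (simp add: power_int_minus norm_inverse norm_power divide_inverse)
  also have "\<dots> \<le> 1/2" using pow_ge2[OF N m(2)] by (intro frac_le) auto
  finally show ?thesis .
qed

lemma right_sum_holo:
  assumes N: "2 \<le> N"
  shows "right_sum Z (of_nat N) n a holomorphic_on Sh"
proof -
  have nz: "1 - T * of_nat N ^ (n - a + 1 + hd ls) \<noteq> 0" if "T \<in> Sh" for T ls
  proof
    assume "1 - T * of_nat N ^ (n - a + 1 + hd ls) = 0"
    then have "T * of_nat N ^ (n - a + 1 + hd ls) = 1" by simp
    then have "norm (T * of_nat N ^ (n - a + 1 + hd ls)) = 1" by simp
    with norm_TQ[OF N _ that, of "n - a + 1 + hd ls"] show False by simp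
  qed
  have h: "(\<lambda>T. (1 / (1 - T * of_nat N ^ (n - a + 1 + hd ls))) * ((\<Prod>l\<leftarrow>ls. vhat Z (of_nat N) l) / adj_prod (of_nat N) ls))
     holomorphic_on Sh" for ls
  proof -
    have d: "(\<lambda>T. 1 - T * (of_nat N :: complex) ^ (n - a + 1 + hd ls)) holomorphic_on Sh"
      by (intro holomorphic_intros)
    have "(\<lambda>T. 1 / (1 - T * (of_nat N :: complex) ^ (n - a + 1 + hd ls))) holomorphic_on Sh"
      by (rule holomorphic_on_divide[OF holomorphic_on_const d]) (use nz in auto)
    then show ?thesis by (rule holomorphic_on_mult[OF _ holomorphic_on_const])
  qed
  show ?thesis
  proof (cases "a - 1 = 0")
    case True
    have "right_sum Z (of_nat N) n a = (\<lambda>T. 1)" by (rule ext) (simp only: right_sum_def if_P[OF True])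
    then show ?thesis by simp
  next
    case False
    have "(\<lambda>T. \<Sum>ls\<in>compositions (a - 1). (1 / (1 - T * of_nat N ^ (n - a + 1 + hd ls))) * ((\<Prod>l\<leftarrow>ls. vhat Z (of_nat N) l) / adj_prod (of_nat N) ls))
     holomorphic_on Sh" by (rule holomorphic_on_sum) (rule h)
    moreover have "right_sum Z (of_nat N) n a = (\<lambda>T. \<Sum>ls\<in>compositions (a - 1). (1 / (1 - T * of_nat N ^ (n - a + 1 + hd ls))) * ((\<Prod>l\<leftarrow>ls. vhat Z (of_nat N) l) / adj_prod (of_nat N) ls))"
      by (rule ext) (simp only: right_sum_def if_not_P[OF False])
    ultimately show ?thesis by (simp only:)
  qed
qed

lemma left_sum_holo:
  assumes N: "2 \<le> N" and a: "a \<le> n"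
  shows "left_sum Z (of_nat N) n a holomorphic_on Sh - {1}"
proof (cases "n - a = 0")
  case True then show ?thesis unfolding left_sum_def by simp
next
  case False
  have nz: "1 - (of_nat N) powi (int a + int (last ks) - int n) / T \<noteq> 0"
    if T: "T \<in> Sh - {1}" and ks: "ks \<in> compositions (n - a)" for T ks
  proof
    let ?w = "(of_nat N :: complex) powi (int a + int (last ks) - int n)"
    assume h: "1 - ?w / T = 0"
    have T0: "T \<noteq> 0" using T by (auto simp: Sh_def)
    then have wT: "?w = T" using h by (simp add: field_simps)
    have le: "last ks \<le> n - a" using comps_last(2)[OF ks] False by simp
    show False
    proof (cases "last ks = n - a")
      case True
      then have "?w = 1" using a by simp
      with wT T show False by simp
    next
      case False
      with le have "int a + int (last ks) - int n < 0" using a by simp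
      from norm_Qneg[OF N this] wT T show False by (simp add: Sh_def)
    qed
  qed
  have T0: "\<And>T. T \<in> Sh - {1} \<Longrightarrow> T \<noteq> 0" by (auto simp: Sh_def)
  have h: "(\<lambda>T. (\<Prod>k\<leftarrow>ks. vhat Z (of_nat N) k) / adj_prod (of_nat N) ks
         * (1 / (1 - (of_nat N) powi (int a + int (last ks) - int n) / T))) holomorphic_on Sh - {1}"
    if ks: "ks \<in> compositions (n - a)" for ks
  proof -
    have d: "(\<lambda>T. 1 - (of_nat N :: complex) powi (int a + int (last ks) - int n) / T) holomorphic_on Sh - {1}"
      by (intro holomorphic_intros) (use T0 in auto)
    have "(\<lambda>T. 1 / (1 - (of_nat N :: complex) powi (int a + int (last ks) - int n) / T)) holomorphic_on Sh - {1}"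
      by (rule holomorphic_on_divide[OF holomorphic_on_const d]) (use nz ks in auto)
    then show ?thesis by (rule holomorphic_on_mult[OF holomorphic_on_const])
  qed
  have "(\<lambda>T. \<Sum>ks\<in>compositions (n - a). (\<Prod>k\<leftarrow>ks. vhat Z (of_nat N) k) / adj_prod (of_nat N) ks
         * (1 / (1 - (of_nat N) powi (int a + int (last ks) - int n) / T))) holomorphic_on Sh - {1}"
    by (rule holomorphic_on_sum) (rule h)
  moreover have "left_sum Z (of_nat N) n a = (\<lambda>T. \<Sum>ks\<in>compositions (n - a). (\<Prod>k\<leftarrow>ks. vhat Z (of_nat N) k) / adj_prod (of_nat N) ks
         * (1 / (1 - (of_nat N) powi (int a + int (last ks) - int n) / T)))"
    by (rule ext) (simp only: left_sum_def if_not_P[OF False])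
  ultimately show ?thesis by (simp only:)
qed

lemma comp_holo:
  assumes N: "2 \<le> N" and k: "1 \<le> k" and Z: "Z holomorphic_on Sh - {1}"
  shows "(\<lambda>T. Z (of_nat N ^ k * T)) holomorphic_on Sh"
proof -
  have "(Z \<circ> (\<lambda>T. of_nat N ^ k * T)) holomorphic_on Sh"
  proof (rule holomorphic_on_compose_gen[OF _ Z])
    show "(\<lambda>T. of_nat N ^ k * T) holomorphic_on Sh" by (intro holomorphic_intros)
    show "(\<lambda>T. of_nat N ^ k * T) ` Sh \<subseteq> Sh - {1}"
    proof
      fix x assume "x \<in> (\<lambda>T. of_nat N ^ k * T) ` Sh"
      then obtain T where T: "T \<in> Sh" "x = of_nat N ^ k * T" by auto
      have "norm x > 1" using norm_TQ[OF N k T(1)] T(2) by (simp add: mult.commute)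
      then show "x \<in> Sh - {1}" by (auto simp: Sh_def)
    qed
  qed
  then show ?thesis by (simp add: o_def)
qed

lemma comp_holo':
  assumes N: "2 \<le> N" and Z: "Z holomorphic_on Sh - {1}"
  shows "(\<lambda>T. Z (of_nat N ^ k * T)) holomorphic_on Sh - {1}"
proof (cases "k = 0")
  case True then show ?thesis using Z by simp
next
  case False
  then show ?thesis using comp_holo[OF N _ Z, of k] by (auto intro: holomorphic_on_subset)
qed

lemma derive_step_holo:
  assumes N: "2 \<le> N" and Z: "Z holomorphic_on Sh - {1}"
  shows "derive_step g Z (of_nat N) n holomorphic_on Sh - {1}"
proof -
  have "(\<lambda>T. left_sum Z (of_nat N) n a T * Z (of_nat N ^ (n - a) * T) * right_sum Z (of_nat N) n a T)
      holomorphic_on Sh - {1}" if "a \<in> {1..n}" for a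
  proof -
    have L: "left_sum Z (of_nat N) n a holomorphic_on Sh - {1}"
      using that left_sum_holo[OF N, of a n Z] by auto
    have C: "(\<lambda>T. Z (of_nat N ^ (n - a) * T)) holomorphic_on Sh - {1}"
      by (rule comp_holo'[OF N Z])
    have R: "right_sum Z (of_nat N) n a holomorphic_on Sh - {1}"
      using right_sum_holo[OF N, of Z n a] by (rule holomorphic_on_subset) auto
    show ?thesis using holomorphic_on_mult[OF holomorphic_on_mult[OF L C] R] by simp
  qed
  then have "(\<lambda>T. \<Sum>a=1..n. left_sum Z (of_nat N) n a T * Z (of_nat N ^ (n - a) * T) * right_sum Z (of_nat N) n a T)
      holomorphic_on Sh - {1}"
    by (intro holomorphic_on_sum) auto
  then show ?thesis
    unfolding derive_step_def by (rule holomorphic_on_mult[OF holomorphic_on_const])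
qed

lemma holo_tendsto:
  assumes "f holomorphic_on S" "open S" "x \<in> S"
  shows "(f \<longlongrightarrow> f x) (at x)"
proof -
  have "continuous_on S f" using assms(1) by (rule holomorphic_on_imp_continuous_on)
  then have "isCont f x" using assms(2,3) continuous_on_eq_continuous_at by blast
  then show ?thesis by (simp add: isCont_def)
qed



lemma zhat_FE:
  assumes N: "2 \<le> N" and Z: "Z holomorphic_on Sh - {1}"
    and FE: "\<And>T. T \<noteq> 0 \<Longrightarrow> Z (1 / (of_nat N * T)) = Z T" and k: "1 \<le> k"
  shows "zhat_at Z (of_nat N) (Suc k) = Z (of_nat N ^ k)"
proof -
  define Q :: complex where "Q = of_nat N"
  define w where "w = Q powi (- int (Suc k))"
  have Q0: "Q \<noteq> 0" using N by (simp add: Q_def)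
  have w: "w = inverse (Q ^ Suc k)" unfolding w_def by (simp only: power_int_minus power_int_of_nat)
  have w0: "w \<noteq> 0" using Q0 by (simp add: w)
  have Qw: "1 / (Q * w) = Q ^ k"
  proof -
    have "1 / (Q * w) = Q ^ Suc k / Q" using Q0 by (simp add: w divide_inverse mult.commute)
    also have "\<dots> = Q ^ k" using Q0 by simp
    finally show ?thesis .
  qed
  have inS: "Q ^ k \<in> Sh - {1}"
  proof -
    have "norm (1 * Q ^ k) > 1" unfolding Q_def by (rule norm_TQ[OF N k]) (simp add: one_in_Sh)
    then show ?thesis by (auto simp: Sh_def)
  qed
  have cont: "isCont Z (Q ^ k)"
    using holo_tendsto[OF Z open_Sh1 inS] by (simp add: isCont_def)
  have lim1: "((\<lambda>T. 1 / (Q * T)) \<longlongrightarrow> 1 / (Q * w)) (at w)"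
    by (intro tendsto_intros) (use Q0 w0 in simp)
  have lim2: "((\<lambda>T. Z (1 / (Q * T))) \<longlongrightarrow> Z (Q ^ k)) (at w)"
    using isCont_tendsto_compose[OF cont lim1[unfolded Qw]] .
  have ev: "eventually (\<lambda>T. Z (1 / (Q * T)) = Z T) (at w)"
  proof -
    have "eventually (\<lambda>T. T \<noteq> 0) (at w)" by (rule eventually_neq_at_within)
    then show ?thesis by eventually_elim (use FE in \<open>simp add: Q_def\<close>)
  qed
  have "((\<lambda>T. Z T) \<longlongrightarrow> Z (Q ^ k)) (at w)"
    using tendsto_cong[OF ev] lim2 by blast
  then have "Lim (at w) Z = Z (Q ^ k)" by (intro tendsto_Lim) auto
  then show ?thesis using k by (simp add: zhat_at_def w_def Q_def)
qed



lemma left_lim: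
  assumes N: "2 \<le> N" and a: "a < n"
  shows "((\<lambda>T. (T - 1) * left_sum Z (of_nat N) n a T) \<longlongrightarrow> vhat Z (of_nat N) (n - a)) (at 1)"
proof -
  define Q :: complex where "Q = of_nat N"
  define c where "c ks = (\<Prod>k\<leftarrow>ks. vhat Z Q k) / adj_prod Q ks" for ks
  define w where "w ks = Q powi (int a + int (last ks) - int n)" for ks
  have na: "n - a \<noteq> 0" using a by simp
  have eq: "(T - 1) * left_sum Z Q n a T = (\<Sum>ks\<in>compositions (n - a). c ks * ((T - 1) * (1 / (1 - w ks / T))))" for T
    unfolding left_sum_def c_def w_def using na by (simp add: sum_distrib_left mult_ac)
  have lim: "((\<lambda>T. c ks * ((T - 1) * (1 / (1 - w ks / T)))) \<longlongrightarrow> c ks * (if ks = [n - a] then 1 else 0)) (at 1)"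
    if ks: "ks \<in> compositions (n - a)" for ks
  proof (cases "ks = [n - a]")
    case True
    have w1: "w ks = 1" using True a by (simp add: w_def)
    have ev: "eventually (\<lambda>T. T = (T - 1) * (1 / (1 - w ks / T))) (at (1::complex))"
    proof -
      have "eventually (\<lambda>T. T \<noteq> (0::complex)) (at 1)" by (rule eventually_neq_at_within)
      moreover have "eventually (\<lambda>T. T \<noteq> (1::complex)) (at 1)" by (rule eventually_neq_at_within)
      ultimately show ?thesis
      proof eventually_elim
        case (elim T)
        then have "T - 1 \<noteq> 0" by simp
        with elim show ?case by (simp add: w1 field_simps)
      qed
    qed
    have "((\<lambda>T::complex. T) \<longlongrightarrow> 1) (at 1)" by (rule tendsto_ident_at)
    then have "((\<lambda>T. (T - 1) * (1 / (1 - w ks / T))) \<longlongrightarrow> 1) (at 1)"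
      using tendsto_cong[OF ev] by blast
    then show ?thesis using True by (intro tendsto_mult_left) simp
  next
    case False
    have le: "last ks < n - a" using comps_last[OF ks] na False by fastforce
    have "norm (w ks) \<le> 1/2" unfolding w_def Q_def by (rule norm_Qneg[OF N]) (use le a in simp)
    then have w1: "1 - w ks / 1 \<noteq> 0" by auto
    have "((\<lambda>T. (T - 1) * (1 / (1 - w ks / T))) \<longlongrightarrow> (1 - 1) * (1 / (1 - w ks / 1))) (at 1)"
      by (intro tendsto_intros) (use w1 in auto)
    then show ?thesis using False by (intro tendsto_mult_left) simp
  qed
  have S: "((\<lambda>T. \<Sum>ks\<in>compositions (n - a). c ks * ((T - 1) * (1 / (1 - w ks / T))))
     \<longlongrightarrow> (\<Sum>ks\<in>compositions (n - a). c ks * (if ks = [n - a] then 1 else 0))) (at 1)"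
    by (rule tendsto_sum) (rule lim)
  have V1: "(\<Sum>ks\<in>compositions (n - a). c ks * (if ks = [n - a] then 1 else 0)) = c [n - a]"
  proof -
    have "[n - a] \<in> compositions (n - a)" using na by (simp add: compositions_def)
    then show ?thesis by (simp add: comps_finite if_distrib cong: if_cong)
  qed
  have V2: "c [n - a] = vhat Z Q (n - a)" by (simp add: c_def adj_prod_def)
  have E: "(\<lambda>T. (T - 1) * left_sum Z Q n a T) = (\<lambda>T. \<Sum>ks\<in>compositions (n - a). c ks * ((T - 1) * (1 / (1 - w ks / T))))"
    by (rule ext) (rule eq)
  show ?thesis using S unfolding V1 V2 E[symmetric] Q_def .
qed



lemma vhat_Suc: "vhat Z Q (Suc m) = vhat Z Q m * zhat_at Z Q (Suc m)"
  by (simp add: vhat_def)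

lemma vhat_1: "vhat Z Q 1 = residue Z 1"
  by (simp add: vhat_def zhat_at_def)

lemma main_lim:
  assumes N: "2 \<le> N" and Z: "Z holomorphic_on Sh - {1}"
    and R: "((\<lambda>T. (T - 1) * Z T) \<longlongrightarrow> residue Z 1) (at 1)"
    and FE: "\<And>T. T \<noteq> 0 \<Longrightarrow> Z (1 / (of_nat N * T)) = Z T"
  shows "((\<lambda>T. (T - 1) * derive_step g Z (of_nat N) n T) \<longlongrightarrow>
     (of_nat N) powi (int (n choose 2) * (int g - 1)) *
     (\<Sum>a=1..n. vhat Z (of_nat N) (n - a + 1) * right_sum Z (of_nat N) n a 1)) (at 1)"
proof -
  define Q :: complex where "Q = of_nat N"
  define C where "C = Q powi (int (n choose 2) * (int g - 1))"
  define f where "f a T = left_sum Z Q n a T * Z (Q ^ (n - a) * T) * right_sum Z Q n a T" for a T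
  have E: "(\<lambda>T. (T - 1) * derive_step g Z Q n T) = (\<lambda>T. C * (\<Sum>a=1..n. (T - 1) * f a T))"
    by (rule ext) (simp add: derive_step_def C_def f_def sum_distrib_left mult_ac)
  have lim: "((\<lambda>T. (T - 1) * f a T) \<longlongrightarrow> vhat Z Q (n - a + 1) * right_sum Z Q n a 1) (at 1)"
    if a: "a \<in> {1..n}" for a
  proof -
    have RS: "((\<lambda>T. right_sum Z Q n a T) \<longlongrightarrow> right_sum Z Q n a 1) (at 1)"
      unfolding Q_def by (rule holo_tendsto[OF right_sum_holo[OF N] open_Sh one_in_Sh])
    show ?thesis
    proof (cases "a = n")
      case True
      have fe: "(\<lambda>T. (T - 1) * f a T) = (\<lambda>T. ((T - 1) * Z T) * right_sum Z Q n a T)"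
        using True by (simp add: f_def left_sum_def mult.assoc)
      have v: "vhat Z Q (n - a + 1) = residue Z 1" using True vhat_1 by simp
      show ?thesis unfolding fe v by (rule tendsto_mult[OF R RS])
    next
      case False
      then have an: "a < n" using a by simp
      have fe: "(\<lambda>T. (T - 1) * f a T) = (\<lambda>T. ((T - 1) * left_sum Z Q n a T) * Z (Q ^ (n - a) * T) * right_sum Z Q n a T)"
        by (simp add: f_def mult_ac)
      have CH: "(\<lambda>T. Z (of_nat N ^ (n - a) * T)) holomorphic_on Sh"
        by (rule comp_holo[OF N _ Z]) (use an in simp)
      have ZC: "((\<lambda>T. Z (Q ^ (n - a) * T)) \<longlongrightarrow> Z (Q ^ (n - a) * 1)) (at 1)"
        unfolding Q_def by (rule holo_tendsto[OF CH open_Sh one_in_Sh])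
      have "((\<lambda>T. ((T - 1) * left_sum Z Q n a T) * Z (Q ^ (n - a) * T) * right_sum Z Q n a T)
          \<longlongrightarrow> vhat Z Q (n - a) * Z (Q ^ (n - a) * 1) * right_sum Z Q n a 1) (at 1)"
        by (intro tendsto_mult RS ZC) (unfold Q_def, rule left_lim[OF N an])
      moreover have "vhat Z Q (n - a + 1) = vhat Z Q (n - a) * Z (Q ^ (n - a))"
        using vhat_Suc[of Z Q "n - a"] zhat_FE[OF N Z FE, of "n - a"] an by (simp add: Q_def)
      ultimately show ?thesis unfolding fe by simp
    qed
  qed
  have "((\<lambda>T. C * (\<Sum>a=1..n. (T - 1) * f a T)) \<longlongrightarrow> C * (\<Sum>a=1..n. vhat Z Q (n - a + 1) * right_sum Z Q n a 1)) (at 1)"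
    by (intro tendsto_mult_left tendsto_sum lim)
  then show ?thesis unfolding E[symmetric] unfolding Q_def C_def .
qed


lemma residue_from_lim:
  assumes f: "f holomorphic_on Sh - {1}" and l: "((\<lambda>T. (T - 1) * f T) \<longlongrightarrow> c) (at 1)"
  shows "residue f 1 = c"
proof (rule residue_simple'[OF open_Sh one_in_Sh f])
  have "(\<lambda>w. f w * (w - 1)) = (\<lambda>T. (T - 1) * f T)" by (rule ext) (rule mult.commute)
  then show "((\<lambda>w. f w * (w - 1)) \<longlongrightarrow> c) (at 1)" using l by (simp only:)
qed

lemma comb_identity:
  assumes n: "1 \<le> n"
  shows "(\<Sum>a=1..n. vhat Z Q (n - a + 1) * right_sum Z Q n a 1)
       = (\<Sum>ds\<in>compositions n. (\<Prod>d\<leftarrow>ds. vhat Z Q d) / adj_prod Q ds)"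
proof -
  let ?v = "vhat Z Q"
  let ?h = "\<lambda>ds. (\<Prod>d\<leftarrow>ds. ?v d) / adj_prod Q ds"
  have inj: "inj_on (\<lambda>(d,ls). d # ls) (SIGMA d:{1..n}. compositions (n - d))"
    by (auto simp: inj_on_def)
  have "(\<Sum>ds\<in>compositions n. ?h ds) = (\<Sum>ds\<in>(\<lambda>(d,ls). d # ls) ` (SIGMA d:{1..n}. compositions (n - d)). ?h ds)"
    using comps_decomp[of n] n by simp
  also have "\<dots> = (\<Sum>p\<in>(SIGMA d:{1..n}. compositions (n - d)). ?h ((\<lambda>(d,ls). d # ls) p))"
    by (rule sum.reindex_cong[OF inj refl refl])
  also have "\<dots> = (\<Sum>(d,ls)\<in>(SIGMA d:{1..n}. compositions (n - d)). ?h (d # ls))"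
    by (rule sum.cong[OF refl]) (auto split: prod.splits)
  also have "\<dots> = (\<Sum>d=1..n. \<Sum>ls\<in>compositions (n - d). ?h (d # ls))"
    by (rule sum.Sigma[symmetric]) (auto simp: comps_finite)
  finally have R: "(\<Sum>ds\<in>compositions n. ?h ds) = (\<Sum>d=1..n. \<Sum>ls\<in>compositions (n - d). ?h (d # ls))" .
  have L: "(\<Sum>a=1..n. ?v (n - a + 1) * right_sum Z Q n a 1)
      = (\<Sum>d=1..n. ?v (n - (n + 1 - d) + 1) * right_sum Z Q n (n + 1 - d) 1)"
    by (subst sum.atLeastAtMost_rev) simp
  have T: "?v (n - (n + 1 - d) + 1) * right_sum Z Q n (n + 1 - d) 1 = (\<Sum>ls\<in>compositions (n - d). ?h (d # ls))"
    if d: "d \<in> {1..n}" for d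
  proof -
    have e1: "n - (n + 1 - d) + 1 = d" using d by auto
    have e2: "n + 1 - d - 1 = n - d" using d by auto
    have e3: "n - (n + 1 - d) + 1 = d" using d by auto
    show ?thesis
    proof (cases "n - d = 0")
      case True
      then show ?thesis unfolding e1 by (simp add: e2 right_sum_def comps_0 adj_prod_single)
    next
      case False
      have "right_sum Z Q n (n + 1 - d) 1 = (\<Sum>ls\<in>compositions (n - d).
         (1 / (1 - 1 * Q ^ (d + hd ls))) * ((\<Prod>l\<leftarrow>ls. ?v l) / adj_prod Q ls))"
        using False by (simp only: right_sum_def e2 e3 if_not_P[OF False] if_False)
      then have "?v d * right_sum Z Q n (n + 1 - d) 1 = (\<Sum>ls\<in>compositions (n - d).
         ?v d * ((1 / (1 - 1 * Q ^ (d + hd ls))) * ((\<Prod>l\<leftarrow>ls. ?v l) / adj_prod Q ls)))"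
        by (simp add: sum_distrib_left)
      also have "\<dots> = (\<Sum>ls\<in>compositions (n - d). ?h (d # ls))"
      proof (rule sum.cong[OF refl])
        fix ls assume "ls \<in> compositions (n - d)"
        then have "ls \<noteq> []" using False by (auto simp: compositions_def)
        then show "?v d * ((1 / (1 - 1 * Q ^ (d + hd ls))) * ((\<Prod>l\<leftarrow>ls. ?v l) / adj_prod Q ls)) = ?h (d # ls)"
          by (simp add: adj_prod_Cons divide_inverse inverse_mult_distrib mult_ac)
      qed
      finally show ?thesis by (simp only: e1)
    qed
  qed
  show ?thesis unfolding L R by (rule sum.cong[OF refl]) (rule T)
qed

lemma Zhat0_good:
  assumes q: "2 \<le> q"
  shows "Zhat0 q g P holomorphic_on Sh - {1}"
    and "((\<lambda>T. (T - 1) * Zhat0 q g P T) \<longlongrightarrow> residue (Zhat0 q g P) 1) (at 1)"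
proof -
  define h where "h T = - (T powi (1 - int g) * poly (map_poly of_int P) T / (1 - of_nat q * T))" for T :: complex
  have nz: "1 - of_nat q * T \<noteq> 0" if "T \<in> Sh" for T :: complex
  proof
    assume "1 - of_nat q * T = 0"
    then have "T * of_nat q ^ 1 = 1" by (simp add: mult.commute)
    with norm_TQ[OF q _ that, of 1] show False by simp
  qed
  have T0: "T \<noteq> 0" if "T \<in> Sh" for T :: complex using that by (auto simp: Sh_def)
  have hh: "h holomorphic_on Sh"
    unfolding h_def by (intro holomorphic_intros) (use nz T0 in auto)
  have eq: "Zhat0 q g P T = h T / (T - 1)" if "T \<in> Sh - {1}" for T
  proof -
    have "T - 1 \<noteq> 0" "1 - T \<noteq> 0" using that by auto
    moreover have "1 - of_nat q * T \<noteq> 0" using nz that by auto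
    have k: "(1 - T) * (1 - of_nat q * T) = - ((1 - of_nat q * T) * (T - 1))" by (simp add: algebra_simps)
    show ?thesis unfolding Zhat0_def h_def k by (simp add: divide_divide_eq_left)
  qed
  have d: "(\<lambda>T. T - 1) holomorphic_on Sh - {1}" by (intro holomorphic_intros)
  have "(\<lambda>T. h T / (T - 1)) holomorphic_on Sh - {1}"
    by (rule holomorphic_on_divide[OF holomorphic_on_subset[OF hh] d]) auto
  then show holo: "Zhat0 q g P holomorphic_on Sh - {1}"
    by (rule holomorphic_transform) (use eq in auto)
  have ev: "eventually (\<lambda>T. h T = (T - 1) * Zhat0 q g P T) (at 1)"
  proof -
    have "eventually (\<lambda>T. T \<in> Sh) (at 1)"
      using open_Sh one_in_Sh by (rule eventually_at_in_open')
    moreover have "eventually (\<lambda>T. T \<noteq> (1::complex)) (at 1)" by (rule eventually_neq_at_within)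
    ultimately show ?thesis
    proof eventually_elim
      case (elim T)
      then have "T - 1 \<noteq> 0" by simp
      with elim eq[of T] show ?case by (simp add: field_simps)
    qed
  qed
  have "(h \<longlongrightarrow> h 1) (at 1)" by (rule holo_tendsto[OF hh open_Sh one_in_Sh])
  then have l: "((\<lambda>T. (T - 1) * Zhat0 q g P T) \<longlongrightarrow> h 1) (at 1)"
    using tendsto_cong[OF ev] by blast
  with residue_from_lim[OF holo l] show "((\<lambda>T. (T - 1) * Zhat0 q g P T) \<longlongrightarrow> residue (Zhat0 q g P) 1) (at 1)"
    by simp
qed

lemma two_le_qpow:
  fixes q :: nat
  assumes q: "2 \<le> q" and rs: "\<forall>n\<in>set rs. n > 0"
  shows "2 \<le> q ^ prod_list rs"
proof -
  have "prod_list rs \<noteq> 0" using rs by (auto simp: prod_list_zero_iff)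
  then have "q ^ 1 \<le> q ^ prod_list rs" using q by (intro power_increasing) auto
  with q show ?thesis by simp
qed

lemma dzeta_rev_good:
  assumes q: "2 \<le> q"
    and hP: "\<forall>T::complex. T \<noteq> 0 \<longrightarrow>
        poly (map_poly of_int P) T
          = of_nat q ^ g * T ^ (2 * g) * poly (map_poly of_int P) (1 / (of_nat q * T))"
  shows "(\<forall>n\<in>set rs. n > 0) \<Longrightarrow> dzeta_rev q g P rs holomorphic_on Sh - {1} \<and>
     ((\<lambda>T. (T - 1) * dzeta_rev q g P rs T) \<longlongrightarrow> residue (dzeta_rev q g P rs) 1) (at 1)"
proof (induction rs)
  case Nil
  then show ?case using Zhat0_good[OF q] by simp
next
  case (Cons n rs)
  define N where "N = q ^ prod_list rs"
  define Z where "Z = dzeta_rev q g P rs"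
  have N2: "2 \<le> N" unfolding N_def by (rule two_le_qpow[OF q]) (use Cons.prems in auto)
  have QN: "(of_nat q ^ prod_list rs :: complex) = of_nat N" by (simp add: N_def)
  have IH: "Z holomorphic_on Sh - {1}" "((\<lambda>T. (T - 1) * Z T) \<longlongrightarrow> residue Z 1) (at 1)"
    using Cons by (auto simp: Z_def)
  have FE: "Z (1 / (of_nat N * T)) = Z T" if "T \<noteq> 0" for T
  proof -
    have q0: "q \<noteq> 0" using q by simp
    show ?thesis using dzeta_rev_FE[OF q0 that hP, of rs] by (simp only: Z_def QN)
  qed
  have D: "dzeta_rev q g P (n # rs) = derive_step g Z (of_nat N) n"
    by (simp add: Z_def QN)
  have holo: "derive_step g Z (of_nat N) n holomorphic_on Sh - {1}"
    by (rule derive_step_holo[OF N2 IH(1)])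
  note l = main_lim[OF N2 IH(1) IH(2) FE, of g n]
  show ?case unfolding D using holo l residue_from_lim[OF holo l] by simp
qed

theorem theorem2p6:
  fixes q g :: nat and P :: "int poly" and ns :: "nat list"
  assumes "curve_L_poly q g P"
    and "ns \<noteq> []" and "\<forall>n\<in>set ns. n > 0"
  shows "residue (dzeta q g P ns) 1 =
    qn q (butlast ns) powi (int (last ns choose 2) * (int g - 1)) *
    (\<Sum>ds\<in>compositions (last ns).
       (\<Prod>d\<leftarrow>ds. vhat (dzeta q g P (butlast ns)) (qn q (butlast ns)) d)
       / adj_prod (qn q (butlast ns)) ds)"
proof -
  have pp: "prime_power q" and hP: "\<forall>T::complex. T \<noteq> 0 \<longrightarrow>
        poly (map_poly of_int P) T
          = of_nat q ^ g * T ^ (2 * g) * poly (map_poly of_int P) (1 / (of_nat q * T))"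
    using assms(1) unfolding curve_L_poly_def by blast+
  have q: "2 \<le> q"
  proof -
    obtain p e where "prime p" "e \<ge> 1" "q = p ^ e" using pp by (auto simp: prime_power_def)
    then have "p ^ 1 \<le> p ^ e" by (intro power_increasing) (use prime_gt_1_nat[OF \<open>prime p\<close>] in auto)
    moreover have "2 \<le> p" using prime_ge_2_nat[OF \<open>prime p\<close>] .
    ultimately show ?thesis using \<open>q = p ^ e\<close> by simp
  qed
  define bs where "bs = butlast ns"
  define n where "n = last ns"
  have ns: "ns = bs @ [n]" using assms(2) by (simp add: bs_def n_def)
  have "last ns \<in> set ns" using assms(2) by (rule last_in_set)
  then have n1: "1 \<le> n" using assms(3) unfolding n_def by fastforce
  have bpos: "\<forall>n\<in>set (rev bs). n > 0" using assms(3) by (auto simp: ns)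
  define N where "N = q ^ prod_list bs"
  define Z where "Z = dzeta q g P bs"
  have N2: "2 \<le> N" unfolding N_def using two_le_qpow[OF q bpos] by simp
  have QN: "qn q bs = of_nat N" by (simp add: qn_def N_def)
  have QN': "(of_nat q ^ prod_list (rev bs) :: complex) = of_nat N" by (simp add: N_def)
  have Zr: "Z = dzeta_rev q g P (rev bs)" by (simp add: Z_def dzeta_def)
  have good: "Z holomorphic_on Sh - {1}" "((\<lambda>T. (T - 1) * Z T) \<longlongrightarrow> residue Z 1) (at 1)"
    using dzeta_rev_good[OF q hP bpos] by (auto simp: Zr)
  have FE: "Z (1 / (of_nat N * T)) = Z T" if "T \<noteq> 0" for T
  proof -
    have q0: "q \<noteq> 0" using q by simp
    show ?thesis using dzeta_rev_FE[OF q0 that hP, of "rev bs"] by (simp only: Zr QN')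
  qed
  have rns: "rev ns = n # rev bs" using ns by simp
  have "dzeta q g P ns = derive_step g (dzeta_rev q g P (rev bs)) (of_nat q ^ prod_list (rev bs)) n"
    unfolding dzeta_def rns by (rule dzeta_rev.simps(2))
  then have D: "dzeta q g P ns = derive_step g Z (of_nat N) n"
    by (simp only: Zr[symmetric] QN')
  have holo: "derive_step g Z (of_nat N) n holomorphic_on Sh - {1}"
    by (rule derive_step_holo[OF N2 good(1)])
  note l = main_lim[OF N2 good(1) good(2) FE, of g n]
  have "residue (dzeta q g P ns) 1 = (of_nat N) powi (int (n choose 2) * (int g - 1)) *
     (\<Sum>a=1..n. vhat Z (of_nat N) (n - a + 1) * right_sum Z (of_nat N) n a 1)"
    unfolding D by (rule residue_from_lim[OF holo l])
  also have "\<dots> = qn q bs powi (int (n choose 2) * (int g - 1)) *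
    (\<Sum>ds\<in>compositions n. (\<Prod>d\<leftarrow>ds. vhat Z (qn q bs) d) / adj_prod (qn q bs) ds)"
    unfolding QN comb_identity[OF n1] ..
  finally show ?thesis by (simp add: bs_def n_def Z_def)
qed


end
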